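(* For every integer $\alpha\ge0$, \[ W_{2\alpha+2}=\Bigl(\sum_{n\ge1}a\bigl(5^{2\alpha+2}n-\delta'_\alpha\bigr)q^n\Bigr)\prod_{n\ge1}(1-q^n)(1-q^{2n}), \] where $\delta'_\alpha=\frac{5^{2\alpha+2}-1}{8}$.
   Context: The cubic partition function $a(n)$ is defined by $\sum_{n\ge 0}a(n)q^n=\prod_{n\ge 1}\frac{1}{(1-q^n)(1-q^{2n})}$ (with $a(m)=0$ for $m<0$). Let $F=q^3\prod_{n\ge1}\frac{(1-q^{25n})(1-q^{50n})}{(1-q^n)(1-q^{2n})}$ and for a formal Laurent series $f=\sum_n c(n)q^n$ let $U(f)=\sum_n c(5n)q^n$. Define $W_1=U(F)$, and for $k\ge1$: $W_{2k}=U(W_{2k-1})$ and $W_{2k+1}=U(W_{2k}F)$. *)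

theory Defs
  imports "HOL-Computational_Algebra.Formal_Power_Series"
begin

(* Expansion of 1/(1 - q^n) as a formal power series over int: sum_{k>=0} q^(n k). *)
definition geom_fps :: "nat \<Rightarrow> int fps" where
  "geom_fps n = Abs_fps (\<lambda>k. if n dvd k then 1 else 0)"

(* Infinite product prod_{n>=1} f n of power series with f n = 1 + O(q^n):
   the coefficient of q^m is that of the finite product over 1 <= n <= m. *)
definition inf_prod_fps :: "(nat \<Rightarrow> int fps) \<Rightarrow> int fps" where
  "inf_prod_fps f = Abs_fps (\<lambda>m. fps_nth (\<Prod>n\<in>{1..m}. f n) m)"

definition cubic_gf :: "int fps" where
  "cubic_gf = inf_prod_fps (\<lambda>n. geom_fps n * geom_fps (2*n))"

definition cubic_a :: "int \<Rightarrow> int" where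
  "cubic_a m = (if m < 0 then 0 else fps_nth cubic_gf (nat m))"

definition U5 :: "int fps \<Rightarrow> int fps" where
  "U5 f = Abs_fps (\<lambda>n. fps_nth f (5*n))"

definition Fser :: "int fps" where
  "Fser = fps_X ^ 3 * inf_prod_fps (\<lambda>n. (1 - fps_X ^ (25*n)) * (1 - fps_X ^ (50*n))
                                         * geom_fps n * geom_fps (2*n))"

(* W_1 = U(F), W_{2k} = U(W_{2k-1}), W_{2k+1} = U(W_{2k} F); W 0 is unused *)
fun W :: "nat \<Rightarrow> int fps" where
  "W 0 = 0"
| "W (Suc n) = (if n = 0 then U5 Fser
                else if even (Suc n) then U5 (W n) else U5 (W n * Fser))"

end

theory Submission
  imports Defs
begin

notation fps_nth (infixl "\<ddagger>" 75)

definition lowok :: "nat \<Rightarrow> int fps \<Rightarrow> bool" where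
  "lowok n A \<longleftrightarrow> A \<ddagger> 0 = 1 \<and> (\<forall>k. 0 < k \<and> k < n \<longrightarrow> A \<ddagger> k = 0)"

lemma mult_agree:
  assumes "\<And>k. k \<le> m \<Longrightarrow> A \<ddagger> k = A' \<ddagger> k" "\<And>k. k \<le> m \<Longrightarrow> B \<ddagger> k = B' \<ddagger> k"
  shows "(A * B) \<ddagger> m = (A' * B') \<ddagger> m"
  unfolding fps_mult_nth using assms by (intro sum.cong) auto

lemma lowok_mult_keep:
  assumes "lowok n A" "j < n"
  shows "(G * A) \<ddagger> j = G \<ddagger> j"
proof -
  have "(G * A) \<ddagger> j = (\<Sum>i=0..j. G\<ddagger>i * A\<ddagger>(j - i))" by (rule fps_mult_nth)
  also have "\<dots> = (\<Sum>i\<in>{j}. G\<ddagger>i * A\<ddagger>(j - i))"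
    using assms unfolding lowok_def
    by (intro sum.mono_neutral_right) auto
  also have "\<dots> = G \<ddagger> j" using assms by (simp add: lowok_def)
  finally show ?thesis .
qed

lemma lowok_mult:
  assumes "lowok n A" "lowok n B" shows "lowok n (A * B)"
  unfolding lowok_def
proof safe
  show "(A*B) \<ddagger> 0 = 1" using assms by (simp add: lowok_def)
  fix k assume k: "0 < k" "k < n"
  have "(A * B) \<ddagger> k = B \<ddagger> k" using lowok_mult_keep[OF assms(1) k(2), of B] by (simp add: mult.commute)
  thus "(A*B) \<ddagger> k = 0" using assms k by (simp add: lowok_def)
qed

lemma stab:
  assumes ok: "\<And>n. n \<ge> 1 \<Longrightarrow> lowok n (f n)" and "m \<le> N" "j \<le> m"
  shows "(\<Prod>n\<in>{1..N}. f n) \<ddagger> j = (\<Prod>n\<in>{1..m}. f n) \<ddagger> j"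
  using assms(2)
proof (induction N rule: dec_induct)
  case base then show ?case by simp
next
  case (step N)
  have "{1..Suc N} = insert (Suc N) {1..N}" by auto
  hence "(\<Prod>n\<in>{1..Suc N}. f n) = (\<Prod>n\<in>{1..N}. f n) * f (Suc N)"
    by (simp add: mult.commute)
  moreover have "j < Suc N" using step assms by simp
  ultimately show ?case using lowok_mult_keep[OF ok[of "Suc N"]] step by simp
qed

lemma inf_prod_nth:
  assumes ok: "\<And>n. n \<ge> 1 \<Longrightarrow> lowok n (f n)" and "j \<le> N"
  shows "inf_prod_fps f \<ddagger> j = (\<Prod>n\<in>{1..N}. f n) \<ddagger> j"
  unfolding inf_prod_fps_def using stab[OF ok assms(2), of j] by simp

lemma inf_prod_mult:
  assumes okf: "\<And>n. n \<ge> 1 \<Longrightarrow> lowok n (f n)" and okg: "\<And>n. n \<ge> 1 \<Longrightarrow> lowok n (g n)"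
  shows "inf_prod_fps (\<lambda>n. f n * g n) = inf_prod_fps f * inf_prod_fps g"
proof (rule fps_ext)
  fix m
  have "inf_prod_fps (\<lambda>n. f n * g n) \<ddagger> m = ((\<Prod>n\<in>{1..m}. f n) * (\<Prod>n\<in>{1..m}. g n)) \<ddagger> m"
    unfolding inf_prod_fps_def by (simp add: prod.distrib)
  also have "\<dots> = (inf_prod_fps f * inf_prod_fps g) \<ddagger> m"
    by (rule mult_agree) (metis inf_prod_nth[OF okf], metis inf_prod_nth[OF okg])
  finally show "inf_prod_fps (\<lambda>n. f n * g n) \<ddagger> m = (inf_prod_fps f * inf_prod_fps g) \<ddagger> m" .
qed

lemma inf_prod_cong:
  assumes "\<And>n. n \<ge> 1 \<Longrightarrow> f n = g n"
  shows "inf_prod_fps f = inf_prod_fps g"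
  unfolding inf_prod_fps_def using assms by (intro fps_ext) (auto intro!: prod.cong)

lemma inf_prod_one: "inf_prod_fps (\<lambda>n. 1) = 1"
  unfolding inf_prod_fps_def by (intro fps_ext) simp

lemma lowok_one_minus: "1 \<le> n \<Longrightarrow> n \<le> d \<Longrightarrow> lowok n (1 - fps_X ^ d)"
  unfolding lowok_def by auto

lemma lowok_geom: "1 \<le> n \<Longrightarrow> n \<le> d \<Longrightarrow> lowok n (geom_fps d)"
  unfolding lowok_def geom_fps_def by (auto dest: dvd_imp_le)

lemma geom_inv: assumes "n \<ge> 1" shows "geom_fps n * (1 - fps_X ^ n) = 1"
proof (rule fps_ext)
  fix k
  have "(geom_fps n * (1 - fps_X ^ n)) \<ddagger> k = geom_fps n \<ddagger> k - (fps_X^n * geom_fps n) \<ddagger> k"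
    by (simp add: algebra_simps)
  also have "\<dots> = (if n dvd k then 1 else 0) - (if k < n then 0 else (if n dvd (k - n) then 1 else 0))"
    by (simp add: fps_X_power_mult_nth geom_fps_def)
  also have "\<dots> = (1::int fps) \<ddagger> k"
  proof (cases "k < n")
    case True then show ?thesis using assms by (auto dest: dvd_imp_le)
  next
    case False
    hence "n dvd (k - n) \<longleftrightarrow> n dvd k" unfolding dvd_minus_self by simp
    then show ?thesis using False assms by auto
  qed
  finally show "(geom_fps n * (1 - fps_X ^ n)) \<ddagger> k = (1::int fps) \<ddagger> k" .
qed

definition dil :: "nat \<Rightarrow> int fps \<Rightarrow> int fps" where
  "dil d A = Abs_fps (\<lambda>k. if d dvd k then A \<ddagger> (k div d) else 0)"

lemma dil_nth: "dil d A \<ddagger> k = (if d dvd k then A \<ddagger> (k div d) else 0)"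
  by (simp add: dil_def)

lemma dil_mult_nth:
  assumes d: "d > 0"
  shows "(dil d A * B) \<ddagger> k = (\<Sum>j=0..k div d. A \<ddagger> j * B \<ddagger> (k - d*j))"
proof -
  have "(dil d A * B) \<ddagger> k = (\<Sum>i=0..k. dil d A \<ddagger> i * B \<ddagger> (k - i))" by (rule fps_mult_nth)
  also have "\<dots> = (\<Sum>i\<in>(\<lambda>j. d*j) ` {0..k div d}. dil d A \<ddagger> i * B \<ddagger> (k - i))"
  proof (rule sum.mono_neutral_right)
    show "finite {0..k}" by simp
    show "(\<lambda>j. d*j) ` {0..k div d} \<subseteq> {0..k}"
      using d by (auto simp: less_eq_div_iff_mult_less_eq mult.commute)
    show "\<forall>i\<in>{0..k} - (\<lambda>j. d*j) ` {0..k div d}. dil d A \<ddagger> i * B \<ddagger> (k - i) = 0"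
    proof
      fix i assume i: "i \<in> {0..k} - (\<lambda>j. d*j) ` {0..k div d}"
      have "\<not> d dvd i"
      proof
        assume "d dvd i"
        then obtain j where j: "i = d*j" by auto
        with i d have "j \<le> k div d" by (auto simp: less_eq_div_iff_mult_less_eq mult.commute)
        with i j show False by auto
      qed
      thus "dil d A \<ddagger> i * B \<ddagger> (k - i) = 0" by (simp add: dil_nth)
    qed
  qed
  also have "\<dots> = (\<Sum>j=0..k div d. dil d A \<ddagger> (d*j) * B \<ddagger> (k - d*j))"
    using d by (subst sum.reindex) (auto simp: inj_on_def)
  also have "\<dots> = (\<Sum>j=0..k div d. A \<ddagger> j * B \<ddagger> (k - d*j))"
    using d by (simp add: dil_nth)
  finally show ?thesis .
qed

lemma U5_dil: "U5 (dil 5 A * B) = A * U5 B"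
proof (rule fps_ext)
  fix n
  have "U5 (dil 5 A * B) \<ddagger> n = (\<Sum>j=0..n. A \<ddagger> j * B \<ddagger> (5*n - 5*j))"
    unfolding U5_def by (simp add: dil_mult_nth)
  also have "\<dots> = (A * U5 B) \<ddagger> n"
    unfolding fps_mult_nth U5_def by (intro sum.cong) (auto simp: diff_mult_distrib2)
  finally show "U5 (dil 5 A * B) \<ddagger> n = (A * U5 B) \<ddagger> n" .
qed

lemma dil_mult:
  assumes d: "d > 0" shows "dil d (A * B) = dil d A * dil d B"
proof (rule fps_ext)
  fix k
  have "(dil d A * dil d B) \<ddagger> k = (\<Sum>j=0..k div d. A \<ddagger> j * dil d B \<ddagger> (k - d*j))"
    by (rule dil_mult_nth[OF d])
  also have "\<dots> = (\<Sum>j=0..k div d. if d dvd k then A \<ddagger> j * B \<ddagger> (k div d - j) else 0)"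
  proof (intro sum.cong refl)
    fix j assume j: "j \<in> {0..k div d}"
    hence le: "d*j \<le> k" using d by (auto simp: less_eq_div_iff_mult_less_eq mult.commute)
    have dv: "d dvd (k - d*j) \<longleftrightarrow> d dvd k"
      using le by (metis dvd_add_left_iff dvd_triv_left le_add_diff_inverse2)
    show "A \<ddagger> j * dil d B \<ddagger> (k - d*j) = (if d dvd k then A \<ddagger> j * B \<ddagger> (k div d - j) else 0)"
    proof (cases "d dvd k")
      case True
      then obtain m where m: "k = d*m" by auto
      with le d have "j \<le> m" by simp
      hence "k - d*j = d*(m - j)" using m by (simp add: diff_mult_distrib2)
      thus ?thesis using True m d by (simp add: dil_nth)
    next
      case False thus ?thesis using dv by (simp add: dil_nth)
    qed
  qed
  also have "\<dots> = dil d (A * B) \<ddagger> k"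
    by (simp add: dil_nth fps_mult_nth)
  finally show "dil d (A * B) \<ddagger> k = (dil d A * dil d B) \<ddagger> k" by simp
qed

lemma dil_one: "d > 0 \<Longrightarrow> dil d 1 = 1"
  by (rule fps_ext) (auto simp: dil_nth elim!: dvdE)

lemma dil_prod: assumes "d > 0" "finite S" shows "dil d (\<Prod>i\<in>S. f i) = (\<Prod>i\<in>S. dil d (f i))"
  using assms(2) by (induction S rule: finite_induct) (simp_all add: dil_one dil_mult assms(1))

lemma dil_one_minus: "d > 0 \<Longrightarrow> dil d (1 - fps_X ^ n) = 1 - fps_X ^ (d*n)"
  by (rule fps_ext) (auto simp: dil_nth)

lemma dil_dil: "dil 5 (dil 5 A) = dil 25 A"
proof (rule fps_ext)
  fix k
  show "dil 5 (dil 5 A) \<ddagger> k = dil 25 A \<ddagger> k"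
  proof (cases "25 dvd k")
    case True
    then obtain m where "k = 25*m" by auto
    thus ?thesis by (simp add: dil_nth)
  next
    case False
    have "5 dvd k \<Longrightarrow> \<not> 5 dvd (k div 5)"
    proof
      assume "5 dvd k" "5 dvd (k div 5)"
      then obtain a b where "k = 5*a" "a = 5*b" by (auto elim!: dvdE)
      thus False using False by auto
    qed
    thus ?thesis using False by (simp add: dil_nth)
  qed
qed

abbreviation Pser :: "int fps" where
  "Pser \<equiv> inf_prod_fps (\<lambda>n. (1 - fps_X ^ n) * (1 - fps_X ^ (2*n)))"

lemma okP: "n \<ge> 1 \<Longrightarrow> lowok n ((1 - fps_X ^ n) * (1 - fps_X ^ (2*n)))"
  by (intro lowok_mult lowok_one_minus) auto

lemma Q_dil: "inf_prod_fps (\<lambda>n. (1 - fps_X ^ (25*n)) * (1 - fps_X ^ (50*n))) = dil 25 Pser"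
proof (rule fps_ext)
  fix m
  have "inf_prod_fps (\<lambda>n. (1 - fps_X ^ (25*n)) * (1 - fps_X ^ (50*n))) \<ddagger> m
      = (\<Prod>n\<in>{1..m}. dil 25 ((1 - fps_X ^ n) * (1 - fps_X ^ (2*n)))) \<ddagger> m"
    unfolding inf_prod_fps_def by (simp add: dil_mult dil_one_minus)
  also have "\<dots> = dil 25 (\<Prod>n\<in>{1..m}. (1 - fps_X ^ n) * (1 - fps_X ^ (2*n))) \<ddagger> m"
    by (simp add: dil_prod)
  also have "\<dots> = dil 25 Pser \<ddagger> m"
    unfolding dil_nth using inf_prod_nth[OF okP, of "m div 25" m] by simp
  finally show "inf_prod_fps (\<lambda>n. (1 - fps_X ^ (25*n)) * (1 - fps_X ^ (50*n))) \<ddagger> m = dil 25 Pser \<ddagger> m" .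
qed

lemma okG: "n \<ge> 1 \<Longrightarrow> lowok n (geom_fps n * geom_fps (2*n))"
  by (intro lowok_mult lowok_geom) auto

lemma GP: "cubic_gf * Pser = 1"
proof -
  have "cubic_gf * Pser = inf_prod_fps (\<lambda>n. geom_fps n * geom_fps (2*n) * ((1 - fps_X ^ n) * (1 - fps_X ^ (2*n))))"
    unfolding cubic_gf_def by (rule inf_prod_mult[OF okG okP, symmetric])
  also have "\<dots> = inf_prod_fps (\<lambda>n. 1)"
  proof (rule inf_prod_cong)
    fix n :: nat assume n: "n \<ge> 1"
    have "geom_fps n * geom_fps (2*n) * ((1 - fps_X ^ n) * (1 - fps_X ^ (2*n)))
        = (geom_fps n * (1 - fps_X ^ n)) * (geom_fps (2*n) * (1 - fps_X ^ (2*n)))"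
      by (simp add: ac_simps)
    also have "\<dots> = 1" using n by (simp add: geom_inv)
    finally show "geom_fps n * geom_fps (2*n) * ((1 - fps_X ^ n) * (1 - fps_X ^ (2*n))) = 1" .
  qed
  finally show ?thesis by (simp add: inf_prod_one)
qed

lemma F_eq: "Fser = dil 5 (dil 5 Pser) * (fps_X ^ 3 * cubic_gf)"
proof -
  have okQ: "\<And>n. n \<ge> 1 \<Longrightarrow> lowok n ((1 - fps_X ^ (25*n)) * (1 - fps_X ^ (50*n)))"
    by (intro lowok_mult lowok_one_minus) auto
  have "inf_prod_fps (\<lambda>n. (1 - fps_X ^ (25*n)) * (1 - fps_X ^ (50*n)) * geom_fps n * geom_fps (2*n))
      = inf_prod_fps (\<lambda>n. ((1 - fps_X ^ (25*n)) * (1 - fps_X ^ (50*n))) * (geom_fps n * geom_fps (2*n)))"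
    by (simp add: ac_simps)
  also have "\<dots> = dil 25 Pser * cubic_gf"
    using inf_prod_mult[OF okQ okG] by (simp add: Q_dil cubic_gf_def)
  finally show ?thesis unfolding Fser_def dil_dil by (simp add: ac_simps)
qed

lemma W1: "W 1 = U5 Fser" by simp
lemma W2: "W 2 = U5 (W 1)" by (simp add: numeral_2_eq_2)
lemma Wodd: "W (2*\<alpha>+3) = U5 (W (2*\<alpha>+2) * Fser)"
proof -
  have "W (Suc (2*\<alpha>+2)) = U5 (W (2*\<alpha>+2) * Fser)"
    using W.simps(2)[of "2*\<alpha>+2"] by (simp del: W.simps)
  moreover have "2*\<alpha>+3 = Suc (2*\<alpha>+2)" by simp
  ultimately show ?thesis by (simp only:)
qed
lemma Weven: "W (2*\<alpha>+4) = U5 (W (2*\<alpha>+3))"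
proof -
  have "W (Suc (2*\<alpha>+3)) = U5 (W (2*\<alpha>+3))"
    using W.simps(2)[of "2*\<alpha>+3"] by (simp del: W.simps)
  moreover have "2*\<alpha>+4 = Suc (2*\<alpha>+3)" by simp
  ultimately show ?thesis by (simp only:)
qed

lemma X3G_nth: "(fps_X ^ 3 * cubic_gf) \<ddagger> k = cubic_a (int k - 3)"
  by (auto simp: fps_X_power_mult_nth cubic_a_def of_nat_diff nat_diff_distrib)

lemma U5U5: "U5 (U5 A) \<ddagger> n = A \<ddagger> (25*n)"
  by (simp add: U5_def)

lemma pow_mod8: "((5::int)^(2*\<alpha>+2)) mod 8 = 1"
proof -
  have "(5::int)^(2*\<alpha>+2) = 25^(\<alpha>+1)" by (simp add: power_mult)
  also have "\<dots> mod 8 = ((25 mod 8)^(\<alpha>+1)) mod 8" by (rule power_mod[symmetric])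
  finally show ?thesis by simp
qed

lemma arith8:
  fixes x :: int assumes "x mod 8 = 1"
  shows "x*(25*m - 3) - (x-1) div 8 = 25*x*m - (25*x - 1) div 8"
proof -
  obtain q where q: "x = 8*q + 1" using assms by (metis mult_div_mod_eq add.commute)
  have "(x - 1) div 8 = q" using q by simp
  moreover have "(25*x - 1) div 8 = 25*q + 3" using q by simp
  ultimately show ?thesis using q by (simp add: algebra_simps)
qed

definition cc :: "nat \<Rightarrow> int \<Rightarrow> int" where
  "cc \<alpha> m = cubic_a (5^(2*\<alpha>+2) * m - (5^(2*\<alpha>+2) - 1) div 8)"

definition TT :: "nat \<Rightarrow> int fps" where
  "TT \<alpha> = Abs_fps (\<lambda>n. cc \<alpha> (int n))"

lemma main_step:
  "U5 (U5 (A * Pser * Fser)) = U5 (U5 (fps_X^3 * A)) * Pser"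
proof -
  have "A * Pser * Fser = dil 5 (dil 5 Pser) * (fps_X^3 * A * (cubic_gf * Pser))"
    unfolding F_eq by (simp add: ac_simps)
  also have "\<dots> = dil 5 (dil 5 Pser) * (fps_X^3 * A)" by (simp add: GP)
  finally have "U5 (U5 (A * Pser * Fser)) = U5 (U5 (dil 5 (dil 5 Pser) * (fps_X^3 * A)))" by (simp only:)
  also have "\<dots> = U5 (dil 5 Pser * U5 (fps_X^3 * A))" by (simp only: U5_dil)
  also have "\<dots> = Pser * U5 (U5 (fps_X^3 * A))" by (simp only: U5_dil)
  finally show ?thesis by (simp only: mult.commute)
qed

lemma Wmain: "W (2*\<alpha>+2) = TT \<alpha> * Pser"
proof (induction \<alpha>)
  case 0
  have "W (2*0+2) = U5 (U5 (dil 5 (dil 5 Pser) * (fps_X ^ 3 * cubic_gf)))"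
    by (simp add: W2 F_eq)
  also have "\<dots> = Pser * U5 (U5 (fps_X ^ 3 * cubic_gf))" by (simp add: U5_dil)
  also have "U5 (U5 (fps_X ^ 3 * cubic_gf)) = TT 0"
    by (rule fps_ext) (simp add: U5U5 X3G_nth TT_def cc_def)
  finally show ?case by (simp add: mult.commute)
next
  case (Suc a)
  have "W (2*Suc a+2) = U5 (U5 (W (2*a+2) * Fser))"
  proof -
    have "2*Suc a+2 = 2*a+4" by simp
    thus ?thesis using Weven[of a] Wodd[of a] by (simp only:)
  qed
  also have "\<dots> = U5 (U5 (fps_X^3 * TT a)) * Pser"
    using main_step Suc.IH by simp
  also have "U5 (U5 (fps_X^3 * TT a)) = TT (Suc a)"
  proof (rule fps_ext)
    fix n
    have m8: "((5::int)^(2*a+2)) mod 8 = 1" by (rule pow_mod8)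
    have e: "(5::int)^(2*Suc a+2) = 25 * 5^(2*a+2)" by simp
    show "U5 (U5 (fps_X^3 * TT a)) \<ddagger> n = TT (Suc a) \<ddagger> n"
    proof (cases "n = 0")
      case True
      have "(5::int)^(2*Suc a+2) \<ge> 9"
        using e by (smt (verit) one_le_power)
      hence "(5^(2*Suc a+2) - 1) div 8 \<ge> (8::int) div 8" by (intro zdiv_mono1) auto
      hence "(5^(2*Suc a+2) - 1) div 8 > (0::int)" by simp
      thus ?thesis using True
        by (simp add: U5U5 fps_X_power_mult_nth TT_def cc_def cubic_a_def del: power_Suc)
    next
      case False
      have e2: "(5::int)^(Suc(Suc(Suc(Suc(2*a))))) = 25 * 5^Suc(Suc(2*a))" by simp
      have "int (25*n - 3) = 25 * int n - 3" using False by simp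
      thus ?thesis using False arith8[OF m8, of "int n"]
        by (simp add: U5U5 fps_X_power_mult_nth TT_def cc_def e2 del: power_Suc)
    qed
  qed
  finally show ?case .
qed

theorem mainTheorem8:
  fixes \<alpha> :: nat
  shows "W (2*\<alpha>+2) =
    Abs_fps (\<lambda>n. if n = 0 then 0
                 else of_int (cubic_a (5^(2*\<alpha>+2) * int n - (5^(2*\<alpha>+2) - 1) div 8)))
    * inf_prod_fps (\<lambda>n. (1 - fps_X ^ n) * (1 - fps_X ^ (2*n)))"
proof -
  have "TT \<alpha> = Abs_fps (\<lambda>n. if n = 0 then 0
                 else of_int (cubic_a (5^(2*\<alpha>+2) * int n - (5^(2*\<alpha>+2) - 1) div 8)))"
  proof (rule fps_ext)
    fix n
    have "(5::int)^(2*\<alpha>+2) \<ge> 25"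
    proof -
      have e: "(5::int)^(2*\<alpha>+2) = 25 * 5^(2*\<alpha>)" by (simp add: power_add)
      have h: "(5::int)^(2*\<alpha>) \<ge> 1" by simp
      show ?thesis unfolding e using h by linarith
    qed
    hence "(5^(2*\<alpha>+2) - 1) div 8 \<ge> (8::int) div 8" by (intro zdiv_mono1; linarith)
    thus "TT \<alpha> \<ddagger> n = Abs_fps (\<lambda>n. if n = 0 then 0
                 else of_int (cubic_a (5^(2*\<alpha>+2) * int n - (5^(2*\<alpha>+2) - 1) div 8))) \<ddagger> n"
      by (simp add: TT_def cc_def cubic_a_def)
  qed
  thus ?thesis using Wmain[of \<alpha>] by simp
qed

end
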